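(* Let $0<T\le 1$ and let $f$ be a function on $[0,T]\times B$ with $|||f|||_{0,\frac12;T}\le 1$. Then $$\frac1T\int_0^T\|f(t)\|_{L^2_x(B)}^2\,dt\le C,$$ where $C$ is an absolute constant (independent of $T$ and $f$).
   Context: $B$ is the unit ball of $\mathbb{R}^3$, $e_n(x)=\frac{\sin(n\pi|x|)}{|x|}$ ($n\in\mathbb{Z}_+$), and $e(y)=e^{2\pi i y}$. The norm $|||\cdot|||=|||\cdot|||_{0,\frac12;T}$ is the norm whose unit ball consists of the functions of the form $$\sum_{n,m}\frac{a_{n,m}}{(|n^2-m|+\frac1T)^{1/2}}e_n(x)e(mt)+\sum_{\substack{n,m\\|n^2-m|>\frac1T}}\frac{a_n}{|n^2-m|}e_n(x)e(mt),\qquad n\in\mathbb{Z}_+,\ m\in\mathbb{Z},$$ with $\sum_{n,m}|a_{n,m}|^2\le1$ and $\sum_n|a_n|^2\le 1$. For a function on $[0,T]\times B$, $|||\cdot|||$ is the infimum over all such representations valid for $t\in[0,T]$. *)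

theory Defs
  imports "HOL-Analysis.Analysis"
begin

definition e_rad :: "nat \<Rightarrow> real^3 \<Rightarrow> complex" where
  "e_rad n x = complex_of_real (sin (real n * pi * norm x) / norm x)"

definition e_time :: "real \<Rightarrow> complex" where
  "e_time y = exp (2 * complex_of_real pi * \<i> * complex_of_real y)"

definition rep_partial ::
  "real \<Rightarrow> (nat \<Rightarrow> int \<Rightarrow> complex) \<Rightarrow> (nat \<Rightarrow> complex) \<Rightarrow> nat \<Rightarrow> real \<Rightarrow> real^3 \<Rightarrow> complex" where
  "rep_partial T a b N t x =
     (\<Sum>n\<in>{1..N}. \<Sum>m\<in>{-int N..int N}.
        (a n m / complex_of_real (sqrt (\<bar>real n ^ 2 - real_of_int m\<bar> + 1 / T))
         + (if \<bar>real n ^ 2 - real_of_int m\<bar> > 1 / T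
            then b n / complex_of_real \<bar>real n ^ 2 - real_of_int m\<bar> else 0))
        * e_rad n x * e_time (real_of_int m * t))"

text \<open>f (on [0,T] x B) equals lam times an element of the unit ball of the norm
  |||.|||_{0,1/2;T}; the series is understood as an L^2([0,T] x B) limit of its partial sums.\<close>
definition in_scaled_ball :: "real \<Rightarrow> real \<Rightarrow> (real \<Rightarrow> real^3 \<Rightarrow> complex) \<Rightarrow> bool" where
  "in_scaled_ball T lam f \<longleftrightarrow>
     (\<exists>a b.
        (\<forall>F. finite F \<and> F \<subseteq> {1..} \<times> UNIV \<longrightarrow> (\<Sum>(n,m)\<in>F. (cmod (a n m))\<^sup>2) \<le> 1) \<and>
        (\<forall>F. finite F \<and> F \<subseteq> {1..} \<longrightarrow> (\<Sum>n\<in>F. (cmod (b n))\<^sup>2) \<le> 1) \<and>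
        ((\<lambda>N. \<integral>\<^sup>+ t\<in>{0..T}. (\<integral>\<^sup>+ x\<in>ball 0 1.
              ennreal ((cmod (f t x - complex_of_real lam * rep_partial T a b N t x))\<^sup>2) \<partial>lborel) \<partial>lborel)
          \<longlonglongrightarrow> 0))"

text \<open>The norm |||f|||_{0,1/2;T} (Minkowski functional of the unit ball; top if no representation).\<close>
definition triple_norm :: "real \<Rightarrow> (real \<Rightarrow> real^3 \<Rightarrow> complex) \<Rightarrow> ennreal" where
  "triple_norm T f = Inf {ennreal lam | lam. lam > 0 \<and> in_scaled_ball T lam f}"

end

theory Submission
  imports Defs
begin



lemma nn_integral_add_meas_right:
  assumes v: "v \<in> borel_measurable M"
  shows "(\<integral>\<^sup>+x. u x + v x \<partial>M) \<le> integral\<^sup>N M u + integral\<^sup>N M v"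
proof -
  have "(\<integral>\<^sup>+x. u x + v x \<partial>M) = (SUP g \<in> {g. simple_function M g \<and> g \<le> (\<lambda>x. u x + v x)}. integral\<^sup>S M g)"
    by (simp add: nn_integral_def)
  also have "\<dots> \<le> integral\<^sup>N M u + integral\<^sup>N M v"
  proof (rule SUP_least)
    fix g assume g: "g \<in> {g. simple_function M g \<and> g \<le> (\<lambda>x. u x + v x)}"
    define w where "w x = (if v x = top then 0 else g x - v x)" for x
    have gm: "g \<in> borel_measurable M" using g borel_measurable_simple_function by auto
    have wm: "w \<in> borel_measurable M" unfolding w_def using gm v by measurable
    have wu: "w x \<le> u x" for x
    proof -
      have "g x \<le> u x + v x" using g by (auto simp: le_fun_def)
      then show ?thesis unfolding w_def by (auto simp: ennreal_minus_le_iff add.commute)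
    qed
    have gw: "g x \<le> w x + v x" for x unfolding w_def by (auto simp: diff_add_self_ennreal top_add add_top)
    have "integral\<^sup>S M g = integral\<^sup>N M g" using g by (simp add: nn_integral_eq_simple_integral)
    also have "\<dots> \<le> (\<integral>\<^sup>+x. w x + v x \<partial>M)" by (intro nn_integral_mono gw)
    also have "\<dots> = integral\<^sup>N M w + integral\<^sup>N M v" using wm v by (simp add: nn_integral_add)
    also have "\<dots> \<le> integral\<^sup>N M u + integral\<^sup>N M v" by (intro add_mono nn_integral_mono wu order_refl)
    finally show "integral\<^sup>S M g \<le> integral\<^sup>N M u + integral\<^sup>N M v" .
  qed
  finally show ?thesis .
qed

lemma nn_integral_cmult_le:
  fixes r :: real
  assumes r: "r > 0"
  shows "(\<integral>\<^sup>+x. ennreal r * u x \<partial>M) \<le> ennreal r * integral\<^sup>N M u"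
proof -
  have "(\<integral>\<^sup>+x. ennreal r * u x \<partial>M) = (SUP g \<in> {g. simple_function M g \<and> g \<le> (\<lambda>x. ennreal r * u x)}. integral\<^sup>S M g)"
    by (simp add: nn_integral_def)
  also have "\<dots> \<le> ennreal r * integral\<^sup>N M u"
  proof (rule SUP_least)
    fix g assume g: "g \<in> {g. simple_function M g \<and> g \<le> (\<lambda>x. ennreal r * u x)}"
    define w where "w x = ennreal (1/r) * g x" for x
    have gm: "g \<in> borel_measurable M" using g borel_measurable_simple_function by auto
    have wm: "w \<in> borel_measurable M" unfolding w_def using gm by measurable
    have c1: "ennreal (1/r) * ennreal r = 1" using r by (simp flip: ennreal_mult)
    have wu: "w x \<le> u x" for x
    proof -
      have "g x \<le> ennreal r * u x" using g by (auto simp: le_fun_def)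
      then have "ennreal (1/r) * g x \<le> ennreal (1/r) * (ennreal r * u x)" by (rule mult_left_mono) simp
      also have "\<dots> = u x" using c1 by (simp add: mult.assoc[symmetric])
      finally show ?thesis unfolding w_def .
    qed
    have gw: "g x = ennreal r * w x" for x
    proof -
      have "ennreal r * ennreal (1/r) = 1" using c1 by (simp add: mult.commute)
      then show ?thesis unfolding w_def by (simp add: mult.assoc[symmetric])
    qed
    have "integral\<^sup>S M g = integral\<^sup>N M g" using g by (simp add: nn_integral_eq_simple_integral)
    also have "\<dots> = (\<integral>\<^sup>+x. ennreal r * w x \<partial>M)" by (rule nn_integral_cong) (simp add: gw)
    also have "\<dots> = ennreal r * integral\<^sup>N M w" using wm by (simp add: nn_integral_cmult)
    also have "\<dots> \<le> ennreal r * integral\<^sup>N M u" by (intro mult_left_mono nn_integral_mono wu) simp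
    finally show "integral\<^sup>S M g \<le> ennreal r * integral\<^sup>N M u" .
  qed
  finally show ?thesis .
qed



lemma parseval_interval:
  fixes \<phi> :: "'i \<Rightarrow> real \<Rightarrow> complex" and c :: "'i \<Rightarrow> complex"
  assumes fin: "finite I"
  and orth: "\<And>j k. j\<in>I \<Longrightarrow> k\<in>I \<Longrightarrow> ((\<lambda>t. \<phi> j t * cnj (\<phi> k t)) has_integral (if j = k then complex_of_real \<kappa> else 0)) {0..1}"
  and kpos: "\<kappa> \<ge> 0"
  shows "(\<integral>\<^sup>+t\<in>{0..1}. ennreal ((cmod (\<Sum>k\<in>I. c k * \<phi> k t))\<^sup>2) \<partial>lborel) = ennreal (\<kappa> * (\<Sum>k\<in>I. (cmod (c k))\<^sup>2))"
proof -
  define G where "G t = (\<Sum>j\<in>I. \<Sum>k\<in>I. (c j * cnj (c k)) * (\<phi> j t * cnj (\<phi> k t)))" for t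
  have FG: "(cmod (\<Sum>k\<in>I. c k * \<phi> k t))\<^sup>2 = Re (G t)" for t
  proof -
    have "complex_of_real ((cmod (\<Sum>k\<in>I. c k * \<phi> k t))\<^sup>2) = (\<Sum>k\<in>I. c k * \<phi> k t) * cnj (\<Sum>k\<in>I. c k * \<phi> k t)"
      by (rule complex_norm_square)
    also have "\<dots> = G t" unfolding G_def cnj_sum sum_product
      by (intro sum.cong refl) (simp add: algebra_simps)
    finally show ?thesis by (metis Re_complex_of_real)
  qed
  have "(G has_integral (\<Sum>j\<in>I. \<Sum>k\<in>I. (c j * cnj (c k)) * (if j = k then complex_of_real \<kappa> else 0))) {0..1}"
    unfolding G_def
    by (intro has_integral_sum fin ballI has_integral_mult_right orth) auto
  also have "(\<Sum>j\<in>I. \<Sum>k\<in>I. (c j * cnj (c k)) * (if j = k then complex_of_real \<kappa> else 0)) = (\<Sum>j\<in>I. (c j * cnj (c j)) * complex_of_real \<kappa>)"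
    using fin by (simp add: if_distrib cong: if_cong)
  also have "\<dots> = complex_of_real (\<kappa> * (\<Sum>k\<in>I. (cmod (c k))\<^sup>2))"
    by (simp add: sum_distrib_left mult.commute flip: complex_norm_square)
  finally have G: "(G has_integral complex_of_real (\<kappa> * (\<Sum>k\<in>I. (cmod (c k))\<^sup>2))) {0..1}" .
  have "((\<lambda>t. Re (G t)) has_integral Re (complex_of_real (\<kappa> * (\<Sum>k\<in>I. (cmod (c k))\<^sup>2)))) {0..1}"
    using has_integral_linear[OF G bounded_linear_Re] by (simp add: o_def)
  then have F: "((\<lambda>t. (cmod (\<Sum>k\<in>I. c k * \<phi> k t))\<^sup>2) has_integral (\<kappa> * (\<Sum>k\<in>I. (cmod (c k))\<^sup>2))) {0..1}"
    by (simp add: FG)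
  show ?thesis
    by (rule nn_integral_has_integral_lebesgue'[OF _ F]) simp
qed



lemma sin_orth:
  fixes n k :: nat assumes n: "n \<ge> 1" and k: "k \<ge> 1"
  shows "((\<lambda>r. sin (real n * pi * r) * sin (real k * pi * r)) has_integral (if n = k then 1/2 else 0)) {0..1}"
proof (cases "n = k")
  case True
  define F where "F r = r/2 - sin (2 * real n * pi * r) / (4 * real n * pi)" for r
  have d: "(F has_real_derivative (sin (real n * pi * r) * sin (real k * pi * r))) (at r)" for r
  proof -
    have "(F has_real_derivative (1/2 - cos (2 * real n * pi * r) * (2 * real n * pi) / (4 * real n * pi))) (at r)"
      unfolding F_def by (auto intro!: derivative_eq_intros)
    moreover have "1/2 - cos (2 * real n * pi * r) * (2 * real n * pi) / (4 * real n * pi) = sin (real n * pi * r) * sin (real k * pi * r)"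
    proof -
      have c: "cos (2 * (real k * pi * r)) = 1 - 2 * (sin (real k * pi * r))\<^sup>2" by (rule cos_double_sin)
      have "2 * real n * pi * r = 2 * (real k * pi * r)" using True by simp
      then show ?thesis using n True c by (simp add: power2_eq_square mult.assoc field_simps)
    qed
    ultimately show ?thesis by simp
  qed
  have "((\<lambda>r. sin (real n * pi * r) * sin (real k * pi * r)) has_integral (F 1 - F 0)) {0..1}"
    by (intro fundamental_theorem_of_calculus) (auto simp: has_real_derivative_iff_has_vector_derivative[symmetric] intro: has_field_derivative_at_within d)
  moreover have "F 1 - F 0 = 1/2" unfolding F_def
    using sin_npi[of "2*n"] by (simp add: mult.assoc)
  ultimately show ?thesis using True by simp
next
  case False
  define F where "F r = (sin ((real n - real k) * pi * r) / ((real n - real k) * pi) - sin ((real n + real k) * pi * r) / ((real n + real k) * pi)) / 2" for r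
  have nz1: "(real n - real k) * pi \<noteq> 0" using False by simp
  have nz2: "(real n + real k) * pi \<noteq> 0" using n by simp
  have d: "(F has_real_derivative (sin (real n * pi * r) * sin (real k * pi * r))) (at r)" for r
  proof -
    have "(F has_real_derivative ((cos ((real n - real k) * pi * r) * ((real n - real k) * pi) / ((real n - real k) * pi) - cos ((real n + real k) * pi * r) * ((real n + real k) * pi) / ((real n + real k) * pi)) / 2)) (at r)"
      unfolding F_def by (auto intro!: derivative_eq_intros)
    moreover have "(cos ((real n - real k) * pi * r) * ((real n - real k) * pi) / ((real n - real k) * pi) - cos ((real n + real k) * pi * r) * ((real n + real k) * pi) / ((real n + real k) * pi)) / 2 = sin (real n * pi * r) * sin (real k * pi * r)"
    proof -
      have a: "x * ((real n - real k) * pi) / ((real n - real k) * pi) = x" for x using nz1 by simp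
      have b: "x * ((real n + real k) * pi) / ((real n + real k) * pi) = x" for x using nz2 by simp
      show ?thesis unfolding a b by (simp add: left_diff_distrib distrib_right cos_diff cos_add)
    qed
    ultimately show ?thesis by simp
  qed
  have "((\<lambda>r. sin (real n * pi * r) * sin (real k * pi * r)) has_integral (F 1 - F 0)) {0..1}"
    by (intro fundamental_theorem_of_calculus) (auto simp: has_real_derivative_iff_has_vector_derivative[symmetric] intro: has_field_derivative_at_within d)
  moreover have "F 1 - F 0 = 0" unfolding F_def
    by (simp add: left_diff_distrib distrib_right sin_diff sin_add)
  ultimately show ?thesis using False by simp
qed



lemma exp_orth:
  fixes m k :: int
  shows "((\<lambda>t. e_time (real_of_int m * t) * cnj (e_time (real_of_int k * t))) has_integral (if m = k then 1 else 0)) {0..1}"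
proof -
  define c where "c = 2 * complex_of_real pi * \<i> * of_int (m - k)"
  have pw: "e_time (real_of_int m * t) * cnj (e_time (real_of_int k * t)) = exp (c * of_real t)" for t
    unfolding e_time_def c_def exp_cnj by (simp add: exp_add[symmetric] algebra_simps)
  show ?thesis
  proof (cases "m = k")
    case True
    then have "c = 0" by (simp add: c_def)
    then have "((\<lambda>t. exp (c * of_real t)) has_integral 1) {0..1}"
      using has_integral_const_real[of "1::complex" 0 1] by simp
    then show ?thesis unfolding pw using True by simp
  next
    case False
    have cnz: "c \<noteq> 0" using False by (simp add: c_def)
    define F where "F t = exp (c * of_real t) / c" for t
    have d: "(F has_vector_derivative exp (c * of_real t)) (at t within {0..1})" for t
    proof -
      have "((\<lambda>z. exp (c * z) / c) has_field_derivative exp (c * of_real t)) (at (of_real t))"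
        using cnz by (auto intro!: derivative_eq_intros)
      then show ?thesis unfolding F_def by (rule has_vector_derivative_real_field)
    qed
    have "((\<lambda>t. exp (c * of_real t)) has_integral (F 1 - F 0)) {0..1}"
      by (intro fundamental_theorem_of_calculus d) auto
    moreover have "exp c = 1"
    proof -
      have "exp ((2 * of_int (m - k) * pi) * \<i>) = 1" by (rule exp_integer_2pi) simp
      then show ?thesis unfolding c_def by (simp add: algebra_simps)
    qed
    then have "F 1 - F 0 = 0" unfolding F_def by simp
    ultimately show ?thesis using False by (simp add: pw)
  qed
qed



lemma dim3: "DIM(real^3) = 3" by simp

lemma ball_shell:
  fixes s :: real
  shows "emeasure lborel (ball (0::real^3) 1 \<inter> {x. s < norm x}) = ennreal (if s < 1 then unit_ball_vol 3 * (1 - (max s 0)^3) else 0)"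
proof -
  let ?V = "unit_ball_vol 3"
  have B: "emeasure lborel (ball (0::real^3) 1) = ennreal ?V" using emeasure_ball[of 1 "0::real^3"] by simp
  consider "s < 0" | "0 \<le> s" "s < 1" | "1 \<le> s" by linarith
  then show ?thesis
  proof cases
    case 1
    then have "ball (0::real^3) 1 \<inter> {x. s < norm x} = ball 0 1" using norm_ge_zero[where 'a="real^3"] by (auto intro: less_le_trans)
    then show ?thesis using 1 B by simp
  next
    case 2
    then have eq: "ball (0::real^3) 1 \<inter> {x. s < norm x} = ball 0 1 - cball 0 s" by auto
    have C: "emeasure lborel (cball (0::real^3) s) = ennreal (?V * s^3)" using emeasure_cball[of s "0::real^3"] 2 by simp
    have "emeasure lborel (ball (0::real^3) 1 - cball 0 s) = emeasure lborel (ball (0::real^3) 1) - emeasure lborel (cball (0::real^3) s)"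
      using 2 by (intro emeasure_Diff) (auto simp: C)
    also have "\<dots> = ennreal (?V - ?V * s^3)" unfolding B C
      using 2 by (subst ennreal_minus) (auto intro!: mult_nonneg_nonneg)
    finally show ?thesis using 2 eq by (simp add: algebra_simps)
  next
    case 3
    then have "ball (0::real^3) 1 \<inter> {x. s < norm x} = {}" by auto
    then show ?thesis using 3 by simp
  qed
qed

definition rad_dens :: "real \<Rightarrow> ennreal" where
  "rad_dens r = ennreal (3 * unit_ball_vol 3 * r^2) * indicator {0<..<1} r"

lemma rad_dens_meas[measurable]: "rad_dens \<in> borel_measurable borel"
  unfolding rad_dens_def by measurable

lemma rad_dens_shell:
  fixes s :: real
  shows "emeasure (density lborel rad_dens) {s<..} = ennreal (if s < 1 then unit_ball_vol 3 * (1 - (max s 0)^3) else 0)"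
proof -
  let ?V = "unit_ball_vol 3"
  have "emeasure (density lborel rad_dens) {s<..} = (\<integral>\<^sup>+ r. rad_dens r * indicator {s<..} r \<partial>lborel)"
    by (rule emeasure_density) auto
  also have "\<dots> = (\<integral>\<^sup>+ r. ennreal (3 * ?V * r^2) * indicator {max s 0<..<1} r \<partial>lborel)"
    unfolding rad_dens_def by (intro nn_integral_cong) (auto simp: indicator_def)
  also have "\<dots> = ennreal (if s < 1 then ?V * (1 - (max s 0)^3) else 0)"
  proof (cases "s < 1")
    case True
    let ?a = "max s 0"
    have "((\<lambda>r. 3 * ?V * r^2) has_integral (?V * 1^3 - ?V * ?a^3)) {?a..1}"
      using True by (intro fundamental_theorem_of_calculus)
        (auto simp: has_real_derivative_iff_has_vector_derivative[symmetric] intro!: derivative_eq_intros)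
    then have "((\<lambda>r. 3 * ?V * r^2) has_integral (?V * (1 - ?a^3))) {?a<..<1}"
      by (simp add: has_integral_Icc_iff_Ioo algebra_simps)
    then show ?thesis using True
      by (subst nn_integral_has_integral_lebesgue') auto
  next
    case False
    then show ?thesis by simp
  qed
  finally show ?thesis .
qed

lemma ind_ball_meas[measurable]: "indicator (ball (0::real^3) 1) \<in> borel_measurable borel"
  by (intro borel_measurable_indicator borel_open) simp

lemma norm_vimage_sets[measurable]: "norm -` {s<..} \<in> sets (borel::(real^3) measure)"
  by (intro borel_open open_vimage continuous_on_norm_id) auto

lemma distr_norm_ball:
  "distr (density lborel (indicator (ball (0::real^3) 1))) borel norm = density lborel rad_dens"
proof (rule measure_eqI_lessThan)
  show "sets (distr (density lborel (indicator (ball (0::real^3) 1))) borel norm) = sets borel" by simp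
  show "sets (density lborel rad_dens) = sets borel" by simp
  have em: "emeasure (distr (density lborel (indicator (ball (0::real^3) 1))) borel norm) {s<..} =
      ennreal (if s < 1 then unit_ball_vol 3 * (1 - (max s 0)^3) else 0)" for s
  proof -
    have "emeasure (distr (density lborel (indicator (ball (0::real^3) 1))) borel norm) {s<..} =
        emeasure (density lborel (indicator (ball (0::real^3) 1))) (norm -` {s<..} \<inter> space (density lborel (indicator (ball (0::real^3) 1))))"
      by (rule emeasure_distr) auto
    also have "\<dots> = (\<integral>\<^sup>+ x. indicator (ball (0::real^3) 1) x * indicator (norm -` {s<..}) x \<partial>lborel)"
      by (subst emeasure_density) auto
    also have "\<dots> = (\<integral>\<^sup>+ x. indicator (ball (0::real^3) 1 \<inter> {x. s < norm x}) x \<partial>lborel)"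
      by (intro nn_integral_cong) (auto simp: indicator_def)
    also have "\<dots> = emeasure lborel (ball (0::real^3) 1 \<inter> {x. s < norm x})"
      by (rule nn_integral_indicator) auto
    finally show ?thesis by (simp add: ball_shell)
  qed
  show "emeasure (distr (density lborel (indicator (ball (0::real^3) 1))) borel norm) {s<..} < \<infinity>" for s
    unfolding em by simp
  show "emeasure (distr (density lborel (indicator (ball (0::real^3) 1))) borel norm) {s<..} = emeasure (density lborel rad_dens) {s<..}" for s
    unfolding em rad_dens_shell ..
qed

lemma radial:
  fixes h :: "real \<Rightarrow> ennreal" assumes h[measurable]: "h \<in> borel_measurable borel"
  shows "(\<integral>\<^sup>+x\<in>ball (0::real^3) 1. h (norm x) \<partial>lborel) = (\<integral>\<^sup>+r. rad_dens r * h r \<partial>lborel)"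
proof -
  have "(\<integral>\<^sup>+x\<in>ball (0::real^3) 1. h (norm x) \<partial>lborel) = (\<integral>\<^sup>+x. indicator (ball (0::real^3) 1) x * h (norm x) \<partial>lborel)"
    by (simp add: mult.commute)
  also have "\<dots> = integral\<^sup>N (density lborel (indicator (ball (0::real^3) 1))) (\<lambda>x. h (norm x))"
    by (rule nn_integral_density[symmetric]) auto
  also have "\<dots> = integral\<^sup>N (distr (density lborel (indicator (ball (0::real^3) 1))) borel norm) h"
    by (rule nn_integral_distr[symmetric]) auto
  also have "\<dots> = integral\<^sup>N (density lborel rad_dens) h" unfolding distr_norm_ball ..
  also have "\<dots> = (\<integral>\<^sup>+r. rad_dens r * h r \<partial>lborel)"
    by (rule nn_integral_density) auto
  finally show ?thesis .
qed




lemma sin_orth_c: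
  assumes "j \<in> {1..N}" "k \<in> {1..N}"
  shows "((\<lambda>t. complex_of_real (sin (real j * pi * t)) * cnj (complex_of_real (sin (real k * pi * t)))) has_integral (if j = k then complex_of_real (1/2) else 0)) {0..1}"
proof -
  have "((\<lambda>t. complex_of_real (sin (real j * pi * t) * sin (real k * pi * t))) has_integral complex_of_real (if j = k then 1/2 else 0)) {0..1}"
    using assms by (intro has_integral_of_real sin_orth) auto
  then show ?thesis by (simp add: if_distrib cong: if_cong)
qed

lemma inner_parseval:
  fixes d :: "nat \<Rightarrow> complex"
  shows "(\<integral>\<^sup>+x\<in>ball (0::real^3) 1. ennreal ((cmod (\<Sum>n\<in>{1..N}. d n * e_rad n x))\<^sup>2) \<partial>lborel)
     = ennreal (3/2 * unit_ball_vol 3 * (\<Sum>n\<in>{1..N}. (cmod (d n))\<^sup>2))"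
proof -
  let ?V = "unit_ball_vol 3"
  define h where "h r = ennreal ((cmod (\<Sum>n\<in>{1..N}. d n * complex_of_real (sin (real n * pi * r) / r)))\<^sup>2)" for r
  have hm[measurable]: "h \<in> borel_measurable borel" unfolding h_def by measurable
  have "(\<integral>\<^sup>+x\<in>ball (0::real^3) 1. ennreal ((cmod (\<Sum>n\<in>{1..N}. d n * e_rad n x))\<^sup>2) \<partial>lborel)
      = (\<integral>\<^sup>+x\<in>ball (0::real^3) 1. h (norm x) \<partial>lborel)"
    unfolding h_def e_rad_def ..
  also have "\<dots> = (\<integral>\<^sup>+r. rad_dens r * h r \<partial>lborel)" by (rule radial) simp
  also have "\<dots> = (\<integral>\<^sup>+r. ennreal (3 * ?V) * (ennreal ((cmod (\<Sum>n\<in>{1..N}. d n * complex_of_real (sin (real n * pi * r))))\<^sup>2) * indicator {0..1} r) \<partial>lborel)"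
  proof (intro nn_integral_cong)
    fix r :: real
    show "rad_dens r * h r = ennreal (3 * ?V) * (ennreal ((cmod (\<Sum>n\<in>{1..N}. d n * complex_of_real (sin (real n * pi * r))))\<^sup>2) * indicator {0..1} r)"
    proof (cases "0 < r \<and> r < 1")
      case True
      have "(\<Sum>n\<in>{1..N}. d n * complex_of_real (sin (real n * pi * r) / r)) = (\<Sum>n\<in>{1..N}. d n * complex_of_real (sin (real n * pi * r))) / complex_of_real r"
        by (simp add: sum_divide_distrib)
      then have "r^2 * (cmod (\<Sum>n\<in>{1..N}. d n * complex_of_real (sin (real n * pi * r) / r)))\<^sup>2 = (cmod (\<Sum>n\<in>{1..N}. d n * complex_of_real (sin (real n * pi * r))))\<^sup>2"
        using True by (simp add: norm_divide power_divide)
      then show ?thesis using True unfolding rad_dens_def h_def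
        by (simp add: ennreal_mult'[symmetric] mult.assoc[symmetric] flip: ennreal_mult)
    next
      case False
      then consider "r \<le> 0 \<or> 1 < r" | "r = 1" by linarith
      then show ?thesis
      proof cases
        case 1 then show ?thesis unfolding rad_dens_def by (auto simp: indicator_def)
      next
        case 2
        have "sin (real n * pi * r) = 0" for n using 2 by simp
        then show ?thesis using 2 unfolding rad_dens_def by (simp add: indicator_def)
      qed
    qed
  qed
  also have "\<dots> = ennreal (3 * ?V) * (\<integral>\<^sup>+r\<in>{0..1}. ennreal ((cmod (\<Sum>n\<in>{1..N}. d n * complex_of_real (sin (real n * pi * r))))\<^sup>2) \<partial>lborel)"
    by (rule nn_integral_cmult) measurable
  also have "(\<integral>\<^sup>+r\<in>{0..1}. ennreal ((cmod (\<Sum>n\<in>{1..N}. d n * complex_of_real (sin (real n * pi * r))))\<^sup>2) \<partial>lborel) = ennreal (1/2 * (\<Sum>n\<in>{1..N}. (cmod (d n))\<^sup>2))"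
    apply (rule parseval_interval[where \<phi>="\<lambda>n r. complex_of_real (sin (real n * pi * r))"])
      apply simp
     apply (rule sin_orth_c; assumption)
    apply simp
    done
  also have "ennreal (3 * ?V) * ennreal (1/2 * (\<Sum>n\<in>{1..N}. (cmod (d n))\<^sup>2)) = ennreal (3/2 * ?V * (\<Sum>n\<in>{1..N}. (cmod (d n))\<^sup>2))"
    by (simp add: ennreal_mult'[symmetric] sum_nonneg)
  finally show ?thesis .
qed



lemma sq_tel: assumes "s > (1/2::real)" shows "1/(s-1/2) - 1/(s+1/2) = 1/(s^2 - 1/4)"
proof -
  have a: "s - 1/2 \<noteq> 0" "s + 1/2 \<noteq> 0" using assms by auto
  have b: "s^2 - 1/4 = (s-1/2)*(s+1/2)" by (simp add: power2_eq_square algebra_simps)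
  show ?thesis unfolding b using a by (simp add: diff_frac_eq)
qed

lemma telescope_sq:
  fixes K :: nat assumes K: "K \<ge> 1"
  shows "(\<Sum>j\<in>{K..<K+n}. 1 / (real j)^2) \<le> 1 / (real K - 1/2) - 1 / (real K + real n - 1/2)"
proof (induction n)
  case 0 then show ?case by simp
next
  case (Suc n)
  have step: "1 / (real (K+n))^2 \<le> 1 / (real K + real n - 1/2) - 1 / (real K + real (Suc n) - 1/2)"
  proof -
    have p: "real K + real n - 1/2 > 0" using K by simp
    have "1 / (real K + real n - 1/2) - 1 / (real K + real n + 1/2) = 1 / ((real K + real n)^2 - 1/4)"
      using p by (intro sq_tel) simp
    moreover have "1 / (real (K+n))^2 \<le> 1 / ((real K + real n)^2 - 1/4)"
    proof -
      have x1: "real K + real n \<ge> 1" using K by simp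
      have q: "(real K + real n)^2 - 1/4 > 0" using x1 one_le_power[OF x1, of 2] by linarith
      have "(real K + real n)^2 > 0" using x1 by simp
      then have "0 < (real K + real n)^2 * ((real K + real n)^2 - 1/4)" using q by simp
      then show ?thesis by (intro divide_left_mono) auto
    qed
    ultimately show ?thesis by (simp add: algebra_simps)
  qed
  have "(\<Sum>j\<in>{K..<K+Suc n}. 1 / (real j)^2) = (\<Sum>j\<in>{K..<K+n}. 1 / (real j)^2) + 1 / (real (K+n))^2"
    by simp
  then show ?case using Suc step by linarith
qed

lemma tail_nat:
  fixes L :: real assumes L: "L \<ge> 1" and fin: "finite J" and J: "\<And>j. j \<in> J \<Longrightarrow> real j > L"
  shows "(\<Sum>j\<in>J. 1 / (real j)^2) \<le> 2 / L"
proof -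
  define K where "K = nat \<lfloor>L\<rfloor> + 1"
  have KL: "real K > L" unfolding K_def using L by linarith
  have KL2: "real K \<le> L + 1" unfolding K_def using L by linarith
  have K1: "K \<ge> 1" unfolding K_def by simp
  have "J \<subseteq> {K..<K + (Max (insert 0 J) + 1)}"
  proof
    fix j assume j: "j \<in> J"
    have "real j > L" using J j .
    then have "j \<ge> K" unfolding K_def using L by linarith
    moreover have "j \<le> Max (insert 0 J)" using fin j by simp
    ultimately show "j \<in> {K..<K + (Max (insert 0 J) + 1)}" by simp
  qed
  then have "(\<Sum>j\<in>J. 1 / (real j)^2) \<le> (\<Sum>j\<in>{K..<K + (Max (insert 0 J) + 1)}. 1 / (real j)^2)"
    by (intro sum_mono2) auto
  also have "\<dots> \<le> 1 / (real K - 1/2) - 1 / (real K + real (Max (insert 0 J) + 1) - 1/2)"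
    by (rule telescope_sq[OF K1])
  also have "\<dots> \<le> 1 / (real K - 1/2)" using K1 by simp
  also have "\<dots> \<le> 2 / L" using KL L by (simp add: field_simps)
  finally show ?thesis .
qed

lemma tail_int:
  fixes L :: real and c :: int assumes L: "L \<ge> 1" and fin: "finite M"
  shows "(\<Sum>m\<in>M. if \<bar>real_of_int c - real_of_int m\<bar> > L then 1 / (real_of_int c - real_of_int m)^2 else 0) \<le> 4 / L"
proof -
  let ?f = "\<lambda>m. 1 / (real_of_int c - real_of_int m)^2"
  define M1 where "M1 = {m\<in>M. real_of_int m > real_of_int c + L}"
  define M2 where "M2 = {m\<in>M. real_of_int m < real_of_int c - L}"
  have "(\<Sum>m\<in>M. if \<bar>real_of_int c - real_of_int m\<bar> > L then ?f m else 0) = (\<Sum>m\<in>M1 \<union> M2. ?f m)"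
    unfolding M1_def M2_def using fin
    by (subst sum.inter_filter[symmetric]) (auto intro!: sum.cong)
  also have "\<dots> = sum ?f M1 + sum ?f M2" using fin L unfolding M1_def M2_def
    by (intro sum.union_disjoint) auto
  also have "sum ?f M1 = (\<Sum>j\<in>(\<lambda>m. nat (m - c)) ` M1. 1 / (real j)^2)"
  proof (subst sum.reindex)
    show "inj_on (\<lambda>m. nat (m - c)) M1" unfolding M1_def inj_on_def using L by auto
    show "sum ?f M1 = sum ((\<lambda>j. 1 / (real j)^2) \<circ> (\<lambda>m. nat (m - c))) M1"
    proof (intro sum.cong refl)
      fix m assume "m \<in> M1"
      then have "m > c" unfolding M1_def using L by auto
      then have "real (nat (m - c)) = real_of_int m - real_of_int c" by simp
      then show "?f m = ((\<lambda>j. 1 / (real j)^2) \<circ> (\<lambda>m. nat (m - c))) m" by (simp add: power2_commute)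
    qed
  qed
  also have "\<dots> \<le> 2 / L"
  proof (rule tail_nat[OF L])
    show "finite ((\<lambda>m. nat (m - c)) ` M1)" using fin unfolding M1_def by simp
    show "real j > L" if "j \<in> (\<lambda>m. nat (m - c)) ` M1" for j
      using that L unfolding M1_def by auto
  qed
  also have "sum ?f M2 = (\<Sum>j\<in>(\<lambda>m. nat (c - m)) ` M2. 1 / (real j)^2)"
  proof (subst sum.reindex)
    show "inj_on (\<lambda>m. nat (c - m)) M2" unfolding M2_def inj_on_def using L by auto
    show "sum ?f M2 = sum ((\<lambda>j. 1 / (real j)^2) \<circ> (\<lambda>m. nat (c - m))) M2"
    proof (intro sum.cong refl)
      fix m assume "m \<in> M2"
      then have "m < c" unfolding M2_def using L by auto
      then have "real (nat (c - m)) = real_of_int c - real_of_int m" by simp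
      then show "?f m = ((\<lambda>j. 1 / (real j)^2) \<circ> (\<lambda>m. nat (c - m))) m" by simp
    qed
  qed
  also have "(\<Sum>j\<in>(\<lambda>m. nat (c - m)) ` M2. 1 / (real j)^2) \<le> 2 / L"
  proof (rule tail_nat[OF L])
    show "finite ((\<lambda>m. nat (c - m)) ` M2)" using fin unfolding M2_def by simp
    show "real j > L" if "j \<in> (\<lambda>m. nat (c - m)) ` M2" for j
      using that L unfolding M2_def by auto
  qed
  finally show ?thesis by simp
qed




definition coef :: "real \<Rightarrow> (nat \<Rightarrow> int \<Rightarrow> complex) \<Rightarrow> (nat \<Rightarrow> complex) \<Rightarrow> nat \<Rightarrow> int \<Rightarrow> complex" where
  "coef T a b n m = a n m / complex_of_real (sqrt (\<bar>real n ^ 2 - real_of_int m\<bar> + 1 / T))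
         + (if \<bar>real n ^ 2 - real_of_int m\<bar> > 1 / T
            then b n / complex_of_real \<bar>real n ^ 2 - real_of_int m\<bar> else 0)"

lemma coef_pointwise:
  assumes T: "0 < T"
  shows "(cmod (coef T a b n m))^2 \<le> 2 * T * (cmod (a n m))^2 + 2 * (cmod (b n))^2 *
      (if \<bar>real_of_int (int (n^2)) - real_of_int m\<bar> > 1/T then 1 / (real_of_int (int (n^2)) - real_of_int m)^2 else 0)"
proof -
  let ?d = "\<bar>real n ^ 2 - real_of_int m\<bar>"
  define \<alpha> where "\<alpha> = a n m / complex_of_real (sqrt (?d + 1 / T))"
  define \<beta> where "\<beta> = (if ?d > 1 / T then b n / complex_of_real ?d else 0)"
  have "cmod (coef T a b n m) \<le> cmod \<alpha> + cmod \<beta>" unfolding coef_def \<alpha>_def \<beta>_def by (rule norm_triangle_ineq)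
  then have "(cmod (coef T a b n m))^2 \<le> (cmod \<alpha> + cmod \<beta>)^2" by (intro power_mono) auto
  also have "\<dots> \<le> 2 * (cmod \<alpha>)^2 + 2 * (cmod \<beta>)^2"
    by (smt (verit, best) sum_squares_bound power2_sum) 
  also have "(cmod \<alpha>)^2 \<le> T * (cmod (a n m))^2"
  proof -
    have pos: "?d + 1/T > 0" using T by (smt (verit) divide_pos_pos)
    have "(cmod \<alpha>)^2 = (cmod (a n m))^2 / (?d + 1/T)" unfolding \<alpha>_def using pos
      by (simp add: norm_divide power_divide)
    also have "\<dots> \<le> (cmod (a n m))^2 / (1/T)" using T pos by (intro divide_left_mono) (auto intro: mult_pos_pos)
    also have "\<dots> = T * (cmod (a n m))^2" by simp
    finally show ?thesis .
  qed
  also have "(cmod \<beta>)^2 = (cmod (b n))^2 *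
      (if \<bar>real_of_int (int (n^2)) - real_of_int m\<bar> > 1/T then 1 / (real_of_int (int (n^2)) - real_of_int m)^2 else 0)"
    unfolding \<beta>_def by (simp add: norm_divide power_divide)
  finally show ?thesis by simp
qed


lemma coef_bound:
  assumes T: "0 < T" "T \<le> 1"
  and ha: "\<forall>F. finite F \<and> F \<subseteq> {1..} \<times> UNIV \<longrightarrow> (\<Sum>(n,m)\<in>F. (cmod (a n m))\<^sup>2) \<le> 1"
  and hb: "\<forall>F. finite F \<and> F \<subseteq> {1..} \<longrightarrow> (\<Sum>n\<in>F. (cmod (b n))\<^sup>2) \<le> 1"
  shows "(\<Sum>n\<in>{1..N}. \<Sum>m\<in>{-int N..int N}. (cmod (coef T a b n m))^2) \<le> 10 * T"
proof -
  define g where "g n m = (if \<bar>real_of_int (int (n^2)) - real_of_int m\<bar> > 1/T then 1 / (real_of_int (int (n^2)) - real_of_int m)^2 else 0)" for n m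
  define A where "A = (\<Sum>n\<in>{1..N}. \<Sum>m\<in>{-int N..int N}. (cmod (a n m))^2)"
  define Bs where "Bs = (\<Sum>n\<in>{1..N}. (cmod (b n))^2 * (\<Sum>m\<in>{-int N..int N}. g n m))"
  have s1: "(\<Sum>n\<in>{1..N}. \<Sum>m\<in>{-int N..int N}. (cmod (coef T a b n m))^2)
     \<le> (\<Sum>n\<in>{1..N}. \<Sum>m\<in>{-int N..int N}. 2 * T * (cmod (a n m))^2 + 2 * (cmod (b n))^2 * g n m)"
    unfolding g_def by (intro sum_mono coef_pointwise T)
  have s2: "(\<Sum>n\<in>{1..N}. \<Sum>m\<in>{-int N..int N}. 2 * T * (cmod (a n m))^2 + 2 * (cmod (b n))^2 * g n m) = 2 * T * A + 2 * Bs"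
    unfolding A_def Bs_def by (simp add: sum.distrib sum_distrib_left mult.assoc)
  have sA: "A \<le> 1"
  proof -
    have "A = (\<Sum>(n,m)\<in>{1..N} \<times> {-int N..int N}. (cmod (a n m))^2)"
      unfolding A_def by (rule sum.cartesian_product)
    also have "\<dots> \<le> 1" by (intro ha[rule_format] conjI) auto
    finally show ?thesis .
  qed
  have sB1: "Bs \<le> (\<Sum>n\<in>{1..N}. (cmod (b n))^2 * (4 * T))"
    unfolding Bs_def
  proof (intro sum_mono mult_left_mono)
    fix n
    have "(\<Sum>m\<in>{-int N..int N}. g n m) \<le> 4 / (1/T)"
      unfolding g_def using T by (intro tail_int) auto
    then show "(\<Sum>m\<in>{-int N..int N}. g n m) \<le> 4 * T" by simp
  qed simp
  have sB2: "(\<Sum>n\<in>{1..N}. (cmod (b n))^2 * (4 * T)) \<le> 4 * T"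
  proof -
    have "(\<Sum>n\<in>{1..N}. (cmod (b n))^2 * (4 * T)) = (\<Sum>n\<in>{1..N}. (cmod (b n))^2) * (4 * T)"
      by (simp add: sum_distrib_right)
    also have "\<dots> \<le> 1 * (4 * T)" using hb T by (intro mult_right_mono) auto
    finally show ?thesis by simp
  qed
  have "2 * T * A \<le> 2 * T" using sA T by simp
  then show ?thesis using s1 s2 sB1 sB2 by linarith
qed




lemma e_time_cont: "continuous_on UNIV e_time"
  unfolding e_time_def by (intro continuous_intros)

lemma e_time_meas[measurable]: "e_time \<in> borel_measurable borel"
  by (rule borel_measurable_continuous_onI[OF e_time_cont])

lemma outer_parseval:
  fixes c :: "int \<Rightarrow> complex" and T :: real assumes T: "T \<le> 1"
  shows "(\<integral>\<^sup>+t\<in>{0..T}. ennreal ((cmod (\<Sum>m\<in>{-int N..int N}. c m * e_time (real_of_int m * t)))\<^sup>2) \<partial>lborel)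
     \<le> ennreal (\<Sum>m\<in>{-int N..int N}. (cmod (c m))\<^sup>2)"
proof -
  have "(\<integral>\<^sup>+t\<in>{0..T}. ennreal ((cmod (\<Sum>m\<in>{-int N..int N}. c m * e_time (real_of_int m * t)))\<^sup>2) \<partial>lborel)
     \<le> (\<integral>\<^sup>+t\<in>{0..1}. ennreal ((cmod (\<Sum>m\<in>{-int N..int N}. c m * e_time (real_of_int m * t)))\<^sup>2) \<partial>lborel)"
    using T by (intro nn_integral_mono mult_left_mono) (auto simp: indicator_def)
  also have "\<dots> = ennreal (1 * (\<Sum>m\<in>{-int N..int N}. (cmod (c m))\<^sup>2))"
    apply (rule parseval_interval[where \<phi>="\<lambda>m t. e_time (real_of_int m * t)"])
      apply simp
     apply (simp only: of_real_1, rule exp_orth)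
    apply simp
    done
  finally show ?thesis by simp
qed


lemma rep_eq:
  "rep_partial T a b N t x = (\<Sum>n\<in>{1..N}. (\<Sum>m\<in>{-int N..int N}. coef T a b n m * e_time (real_of_int m * t)) * e_rad n x)"
  unfolding rep_partial_def coef_def sum_distrib_right by (simp add: mult_ac)

lemma sq_split:
  fixes f p :: complex and lam :: real
  shows "(cmod f)^2 \<le> 2 * (cmod (f - complex_of_real lam * p))^2 + 2 * lam^2 * (cmod p)^2"
proof -
  have "cmod f \<le> cmod (f - complex_of_real lam * p) + cmod (complex_of_real lam * p)"
    by (metis diff_add_cancel norm_triangle_ineq)
  then have "(cmod f)^2 \<le> (cmod (f - complex_of_real lam * p) + cmod (complex_of_real lam * p))^2"
    by (intro power_mono) auto
  also have "\<dots> \<le> 2 * (cmod (f - complex_of_real lam * p))^2 + 2 * (cmod (complex_of_real lam * p))^2"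
    by (smt (verit, best) sum_squares_bound power2_sum)
  also have "(cmod (complex_of_real lam * p))^2 = lam^2 * (cmod p)^2"
    by (simp add: norm_mult power_mult_distrib)
  finally show ?thesis by simp
qed






lemma q1: fixes T K :: real assumes T0: "0<T" and K0: "0 \<le> K" shows "ennreal 2 * ennreal T + ennreal (80 * K * T) = ennreal ((2 + 80 * K) * T)"
proof -
  have "ennreal 2 * ennreal T = ennreal (2*T)" using T0 by (simp add: ennreal_mult)
  moreover have "ennreal (2*T) + ennreal (80 * K * T) = ennreal (2*T + 80 * K * T)" using T0 K0 by (simp add: ennreal_plus)
  moreover have "2*T + 80 * K * T = (2 + 80 * K) * T" by (simp add: algebra_simps)
  ultimately show ?thesis by simp
qed
lemma q2: fixes T K :: real assumes T0: "0<T" and K0: "0 \<le> K" shows "ennreal (1 / T) * ennreal ((2 + 80 * K) * T) = ennreal (2 + 80 * K)"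
proof -
  have "ennreal (1 / T) * ennreal ((2 + 80 * K) * T) = ennreal (1 / T * ((2 + 80 * K) * T))" using T0 K0 by (intro ennreal_mult[symmetric]) auto
  moreover have "1 / T * ((2 + 80 * K) * T) = 2 + 80 * K" using T0 by simp
  ultimately show ?thesis by simp
qed
theorem lemma2p1:
  "\<exists>C::real. \<forall>(T::real) (f::real \<Rightarrow> real^3 \<Rightarrow> complex).
     0 < T \<and> T \<le> 1 \<and> triple_norm T f \<le> 1 \<longrightarrow>
     ennreal (1 / T) * (\<integral>\<^sup>+ t\<in>{0..T}. (\<integral>\<^sup>+ x\<in>ball 0 1. ennreal ((cmod (f t x))\<^sup>2) \<partial>lborel) \<partial>lborel)
       \<le> ennreal C"
proof (intro exI allI impI)
  define K where "K = 3/2 * unit_ball_vol 3"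
  have K0: "K \<ge> 0" unfolding K_def by simp
  fix T :: real and f :: "real \<Rightarrow> real^3 \<Rightarrow> complex"
  assume hT: "0 < T \<and> T \<le> 1 \<and> triple_norm T f \<le> 1"
  then have T0: "0 < T" and T1: "T \<le> 1" and tn: "triple_norm T f \<le> 1" by auto
  have "Inf {ennreal lam | lam. lam > 0 \<and> in_scaled_ball T lam f} < 2"
    using tn unfolding triple_norm_def by (rule le_less_trans) simp
  then obtain lam where lam0: "lam > 0" and lamb: "in_scaled_ball T lam f" and lam2: "ennreal lam < 2"
    by (auto simp: Inf_less_iff)
  have lam2': "lam < 2" using lam2 lam0 by (metis ennreal_less_iff ennreal_numeral less_le zero_less_numeral)
  obtain a b where ha: "\<forall>F. finite F \<and> F \<subseteq> {1..} \<times> UNIV \<longrightarrow> (\<Sum>(n,m)\<in>F. (cmod (a n m))\<^sup>2) \<le> 1"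
    and hb: "\<forall>F. finite F \<and> F \<subseteq> {1..} \<longrightarrow> (\<Sum>n\<in>F. (cmod (b n))\<^sup>2) \<le> 1"
    and hlim: "(\<lambda>N. \<integral>\<^sup>+ t\<in>{0..T}. (\<integral>\<^sup>+ x\<in>ball 0 1.
              ennreal ((cmod (f t x - complex_of_real lam * rep_partial T a b N t x))\<^sup>2) \<partial>lborel) \<partial>lborel)
          \<longlonglongrightarrow> 0"
    using lamb unfolding in_scaled_ball_def by blast
  have "\<forall>\<^sub>F N in sequentially. (\<integral>\<^sup>+ t\<in>{0..T}. (\<integral>\<^sup>+ x\<in>ball 0 1.
              ennreal ((cmod (f t x - complex_of_real lam * rep_partial T a b N t x))\<^sup>2) \<partial>lborel) \<partial>lborel) < ennreal T"
    using order_tendstoD(2)[OF hlim] T0 by simp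
  then obtain N where hN: "(\<integral>\<^sup>+ t\<in>{0..T}. (\<integral>\<^sup>+ x\<in>ball 0 1.
              ennreal ((cmod (f t x - complex_of_real lam * rep_partial T a b N t x))\<^sup>2) \<partial>lborel) \<partial>lborel) < ennreal T"
    by (auto simp: eventually_sequentially)
  define P where "P t x = rep_partial T a b N t x" for t x
  define d where "d n t = (\<Sum>m\<in>{-int N..int N}. coef T a b n m * e_time (real_of_int m * t))" for n t
  define U where "U t = (\<integral>\<^sup>+ x\<in>ball (0::real^3) 1. ennreal ((cmod (f t x - complex_of_real lam * P t x))\<^sup>2) \<partial>lborel)" for t
  define c2 where "c2 = 2 * lam^2"
  have c2pos: "c2 > 0" unfolding c2_def using lam0 by simp
  have Pm[measurable]: "(\<lambda>x. P t x) \<in> borel_measurable borel" for t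
    unfolding P_def rep_partial_def e_rad_def by measurable
  have W: "(\<integral>\<^sup>+ x\<in>ball (0::real^3) 1. ennreal ((cmod (P t x))\<^sup>2) \<partial>lborel) = ennreal (K * (\<Sum>n\<in>{1..N}. (cmod (d n t))\<^sup>2))" for t
    unfolding P_def rep_eq d_def K_def by (rule inner_parseval)
  have inner: "(\<integral>\<^sup>+ x\<in>ball (0::real^3) 1. ennreal ((cmod (f t x))\<^sup>2) \<partial>lborel)
     \<le> ennreal 2 * U t + ennreal (c2 * K * (\<Sum>n\<in>{1..N}. (cmod (d n t))\<^sup>2))" for t
  proof -
    have "(\<integral>\<^sup>+ x\<in>ball (0::real^3) 1. ennreal ((cmod (f t x))\<^sup>2) \<partial>lborel)
       \<le> (\<integral>\<^sup>+ x. ennreal 2 * (ennreal ((cmod (f t x - complex_of_real lam * P t x))\<^sup>2) * indicator (ball 0 1) x)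
             + ennreal c2 * (ennreal ((cmod (P t x))\<^sup>2) * indicator (ball 0 1) x) \<partial>lborel)"
    proof (intro nn_integral_mono)
      fix x :: "real^3"
      have "ennreal ((cmod (f t x))\<^sup>2) \<le> ennreal (2 * (cmod (f t x - complex_of_real lam * P t x))^2 + c2 * (cmod (P t x))^2)"
        unfolding c2_def using sq_split[of "f t x" lam "P t x"] by (intro ennreal_leI) simp
      also have "\<dots> = ennreal 2 * ennreal ((cmod (f t x - complex_of_real lam * P t x))^2) + ennreal c2 * ennreal ((cmod (P t x))^2)"
      proof -
        have "ennreal (2 * (cmod (f t x - complex_of_real lam * P t x))^2 + c2 * (cmod (P t x))^2) = ennreal (2 * (cmod (f t x - complex_of_real lam * P t x))^2) + ennreal (c2 * (cmod (P t x))^2)"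
          using c2pos by (intro ennreal_plus) auto
        also have "ennreal (2 * (cmod (f t x - complex_of_real lam * P t x))^2) = ennreal 2 * ennreal ((cmod (f t x - complex_of_real lam * P t x))^2)"
          by (intro ennreal_mult) auto
        also have "ennreal (c2 * (cmod (P t x))^2) = ennreal c2 * ennreal ((cmod (P t x))^2)"
          using c2pos by (intro ennreal_mult) auto
        finally show ?thesis .
      qed
      finally show "ennreal ((cmod (f t x))\<^sup>2) * indicator (ball 0 1) x \<le> ennreal 2 * (ennreal ((cmod (f t x - complex_of_real lam * P t x))\<^sup>2) * indicator (ball 0 1) x)
             + ennreal c2 * (ennreal ((cmod (P t x))\<^sup>2) * indicator (ball 0 1) x)"
        by (auto simp: indicator_def)
    qed
    also have "\<dots> \<le> (\<integral>\<^sup>+ x. ennreal 2 * (ennreal ((cmod (f t x - complex_of_real lam * P t x))\<^sup>2) * indicator (ball 0 1) x) \<partial>lborel)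
        + (\<integral>\<^sup>+ x. ennreal c2 * (ennreal ((cmod (P t x))\<^sup>2) * indicator (ball (0::real^3) 1) x) \<partial>lborel)"
      by (rule nn_integral_add_meas_right) measurable
    also have "\<dots> \<le> ennreal 2 * U t + ennreal c2 * (\<integral>\<^sup>+ x\<in>ball (0::real^3) 1. ennreal ((cmod (P t x))\<^sup>2) \<partial>lborel)"
    proof (intro add_mono)
      show "(\<integral>\<^sup>+ x. ennreal 2 * (ennreal ((cmod (f t x - complex_of_real lam * P t x))\<^sup>2) * indicator (ball 0 1) x) \<partial>lborel) \<le> ennreal 2 * U t"
        unfolding U_def by (rule nn_integral_cmult_le) simp
      show "(\<integral>\<^sup>+ x. ennreal c2 * (ennreal ((cmod (P t x))\<^sup>2) * indicator (ball (0::real^3) 1) x) \<partial>lborel) \<le> ennreal c2 * (\<integral>\<^sup>+ x\<in>ball (0::real^3) 1. ennreal ((cmod (P t x))\<^sup>2) \<partial>lborel)"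
        by (subst nn_integral_cmult) auto
    qed
    also have "\<dots> = ennreal 2 * U t + ennreal (c2 * K * (\<Sum>n\<in>{1..N}. (cmod (d n t))\<^sup>2))"
      unfolding W using c2pos K0 by (simp add: ennreal_mult'[symmetric] mult.assoc sum_nonneg)
    finally show ?thesis .
  qed
  have dm[measurable]: "(\<lambda>t. d n t) \<in> borel_measurable borel" for n
    unfolding d_def by measurable
  have outer: "(\<integral>\<^sup>+ t\<in>{0..T}. (\<integral>\<^sup>+ x\<in>ball 0 1. ennreal ((cmod (f t x))\<^sup>2) \<partial>lborel) \<partial>lborel)
     \<le> ennreal 2 * (\<integral>\<^sup>+ t\<in>{0..T}. U t \<partial>lborel) + (\<integral>\<^sup>+ t\<in>{0..T}. ennreal (c2 * K * (\<Sum>n\<in>{1..N}. (cmod (d n t))\<^sup>2)) \<partial>lborel)"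
  proof -
    have "(\<integral>\<^sup>+ t\<in>{0..T}. (\<integral>\<^sup>+ x\<in>ball 0 1. ennreal ((cmod (f t x))\<^sup>2) \<partial>lborel) \<partial>lborel)
       \<le> (\<integral>\<^sup>+ t. ennreal 2 * (U t * indicator {0..T} t) + ennreal (c2 * K * (\<Sum>n\<in>{1..N}. (cmod (d n t))\<^sup>2)) * indicator {0..T} t \<partial>lborel)"
    proof (intro nn_integral_mono)
      fix t :: real
      show "(\<integral>\<^sup>+ x\<in>ball 0 1. ennreal ((cmod (f t x))\<^sup>2) \<partial>lborel) * indicator {0..T} t
         \<le> ennreal 2 * (U t * indicator {0..T} t) + ennreal (c2 * K * (\<Sum>n\<in>{1..N}. (cmod (d n t))\<^sup>2)) * indicator {0..T} t"
        using inner[of t] by (auto simp: indicator_def)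
    qed
    also have "\<dots> \<le> (\<integral>\<^sup>+ t. ennreal 2 * (U t * indicator {0..T} t) \<partial>lborel) + (\<integral>\<^sup>+ t\<in>{0..T}. ennreal (c2 * K * (\<Sum>n\<in>{1..N}. (cmod (d n t))\<^sup>2)) \<partial>lborel)"
      by (rule nn_integral_add_meas_right) measurable
    also have "(\<integral>\<^sup>+ t. ennreal 2 * (U t * indicator {0..T} t) \<partial>lborel) \<le> ennreal 2 * (\<integral>\<^sup>+ t\<in>{0..T}. U t \<partial>lborel)"
      by (rule nn_integral_cmult_le) simp
    finally show ?thesis by (simp add: add_right_mono)
  qed
  have tpart: "(\<integral>\<^sup>+ t\<in>{0..T}. ennreal (c2 * K * (\<Sum>n\<in>{1..N}. (cmod (d n t))\<^sup>2)) \<partial>lborel) \<le> ennreal (80 * K * T)"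
  proof -
    have "(\<integral>\<^sup>+ t\<in>{0..T}. ennreal (c2 * K * (\<Sum>n\<in>{1..N}. (cmod (d n t))\<^sup>2)) \<partial>lborel)
       = (\<integral>\<^sup>+ t. ennreal (c2 * K) * (\<Sum>n\<in>{1..N}. ennreal ((cmod (d n t))\<^sup>2) * indicator {0..T} t) \<partial>lborel)"
    proof (intro nn_integral_cong)
      fix t :: real
      show "ennreal (c2 * K * (\<Sum>n\<in>{1..N}. (cmod (d n t))\<^sup>2)) * indicator {0..T} t = ennreal (c2 * K) * (\<Sum>n\<in>{1..N}. ennreal ((cmod (d n t))\<^sup>2) * indicator {0..T} t)"
      proof (cases "t \<in> {0..T}")
        case True
        then show ?thesis using c2pos K0 by (simp add: ennreal_mult'[symmetric] sum_nonneg mult.assoc)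
      next
        case False
        then show ?thesis by simp
      qed
    qed
    also have "\<dots> = ennreal (c2 * K) * (\<Sum>n\<in>{1..N}. (\<integral>\<^sup>+ t\<in>{0..T}. ennreal ((cmod (d n t))\<^sup>2) \<partial>lborel))"
    proof -
      have e1: "(\<integral>\<^sup>+ t. (\<Sum>n\<in>{1..N}. ennreal ((cmod (d n t))\<^sup>2) * indicator {0..T} t) \<partial>lborel) = (\<Sum>n\<in>{1..N}. (\<integral>\<^sup>+ t\<in>{0..T}. ennreal ((cmod (d n t))\<^sup>2) \<partial>lborel))"
        by (rule nn_integral_sum) measurable
      have e2: "(\<integral>\<^sup>+ t. ennreal (c2 * K) * (\<Sum>n\<in>{1..N}. ennreal ((cmod (d n t))\<^sup>2) * indicator {0..T} t) \<partial>lborel) = ennreal (c2 * K) * (\<integral>\<^sup>+ t. (\<Sum>n\<in>{1..N}. ennreal ((cmod (d n t))\<^sup>2) * indicator {0..T} t) \<partial>lborel)"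
        by (rule nn_integral_cmult) measurable
      show ?thesis unfolding e2 e1 ..
    qed
    also have "\<dots> \<le> ennreal (c2 * K) * (\<Sum>n\<in>{1..N}. ennreal (\<Sum>m\<in>{-int N..int N}. (cmod (coef T a b n m))\<^sup>2))"
      unfolding d_def by (intro mult_left_mono sum_mono outer_parseval T1) simp
    also have "\<dots> = ennreal (c2 * K * (\<Sum>n\<in>{1..N}. \<Sum>m\<in>{-int N..int N}. (cmod (coef T a b n m))\<^sup>2))"
      using c2pos K0 by (simp add: ennreal_mult'[symmetric] sum_nonneg)
    also have "\<dots> \<le> ennreal (c2 * K * (10 * T))"
      using c2pos K0 coef_bound[OF T0 T1 ha hb, of N] by (intro ennreal_leI mult_left_mono) auto
    also have "\<dots> \<le> ennreal (80 * K * T)"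
    proof (intro ennreal_leI)
      have "lam^2 \<le> 2^2" using lam0 lam2' by (intro power_mono) auto
      then have "c2 \<le> 8" unfolding c2_def by simp
      then have "c2 * (K * (10 * T)) \<le> 8 * (K * (10 * T))" using K0 T0 by (intro mult_right_mono) auto
      then show "c2 * K * (10 * T) \<le> 80 * K * T" by (simp add: mult.assoc)
    qed
    finally show ?thesis .
  qed
  have Ubound: "(\<integral>\<^sup>+ t\<in>{0..T}. U t \<partial>lborel) < ennreal T"
    using hN unfolding U_def P_def .
  have "(\<integral>\<^sup>+ t\<in>{0..T}. (\<integral>\<^sup>+ x\<in>ball 0 1. ennreal ((cmod (f t x))\<^sup>2) \<partial>lborel) \<partial>lborel)
      \<le> ennreal 2 * ennreal T + ennreal (80 * K * T)"
    by (rule order_trans[OF outer add_mono[OF mult_left_mono[OF less_imp_le[OF Ubound]] tpart]]) simp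
  also have "\<dots> = ennreal ((2 + 80 * K) * T)"
    using T0 K0 by (rule q1)
  finally have main: "(\<integral>\<^sup>+ t\<in>{0..T}. (\<integral>\<^sup>+ x\<in>ball 0 1. ennreal ((cmod (f t x))\<^sup>2) \<partial>lborel) \<partial>lborel) \<le> ennreal ((2 + 80 * K) * T)" .
  have "ennreal (1 / T) * (\<integral>\<^sup>+ t\<in>{0..T}. (\<integral>\<^sup>+ x\<in>ball 0 1. ennreal ((cmod (f t x))\<^sup>2) \<partial>lborel) \<partial>lborel)
     \<le> ennreal (1 / T) * ennreal ((2 + 80 * K) * T)"
    by (intro mult_left_mono main) simp
  also have "\<dots> = ennreal (2 + 80 * K)"
    using T0 K0 by (rule q2)
  finally show "ennreal (1 / T) * (\<integral>\<^sup>+ t\<in>{0..T}. (\<integral>\<^sup>+ x\<in>ball 0 1. ennreal ((cmod (f t x))\<^sup>2) \<partial>lborel) \<partial>lborel)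
     \<le> ennreal (2 + 80 * (3/2 * unit_ball_vol 3))" unfolding K_def .
qed


end
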